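(* Let $n\ge3$, $l\ge1$, $\mathfrak g=A^{(2)}_{2n-1}$, $B$ the level-$l$ perfect crystal of the context, $\lambda=l\Lambda_0$, $d=2n-1$, and $i^{(j)}_1=i^{(j)}_{2n-1}=\epsilon(j+1)$, $i^{(j)}_a=i^{(j)}_{2n-a}=a$ for $2\le a\le n$. Then: (II) $B^{(j)}_d=B$ for all $j\ge1$; (III) $\langle\lambda_j,h_{i^{(j)}_a}\rangle\le\varepsilon_{i^{(j)}_a}(b)$ for all $j\ge1$, $1\le a\le d$, $b\in B^{(j)}_{a-1}$; (IV') for all $j\ge1$, $a=1,\dots,d$: $\varepsilon_{i^{(j)}_{a+1}}(b^{(j)}_a)=0$, $\varphi_{i^{(j)}_{a+1}}(b^{(j)}_a)>0$ (with $i^{(j)}_{d+1}:=i^{(j+1)}_1$), and $b^{(j+1)}_0=\tilde f_{i^{(j+1)}_1}^mb^{(j)}_d$ with $m=\langle\lambda_{j+1},h_{i^{(j+1)}_1}\rangle$. Moreover $B^{(j)}_0=\{(0,\dots,0,l)\}$ ($j$ odd), $\{(l,0,\dots,0)\}$ ($j$ even), $B^{(j)}_{2n-1}=B$, and for $1\le a\le n-1$: $B^{(j)}_a$ is the set of $b\in B$ with all coordinates $0$ except possibly $x_2,\dots,x_{a+1},\bar x_1$ ($j$ odd), resp. $x_1,\dots,x_{a+1}$ ($j$ even); $B^{(j)}_{n+a-1}$ is the set of $b\in B$ with all coordinates $0$ except possibly $x_2,\dots,x_n,\bar x_n,\dots,\bar x_{n-a+1},\bar x_1$ ($j$ odd),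 resp. $x_1,\dots,x_n,\bar x_n,\dots,\bar x_{n-a+1}$ ($j$ even). Also $b^{(j)}_0=(0,\dots,0,l)$ ($j$ odd), $(l,0,\dots,0)$ ($j$ even); $b^{(j)}_{2n-1}=(l,0,\dots,0)$ ($j$ odd), $(0,\dots,0,l)$ ($j$ even); and for $1\le a\le n-1$, $b^{(j)}_a$ has $x_{a+1}=l$ and $b^{(j)}_{n+a-1}$ has $\bar x_{n-a+1}=l$, all other coordinates $0$.
   Context: $\epsilon(i)=0$ for $i$ even and $1$ for $i$ odd; $(x)_+=\max(x,0)$. $B=\{(x_1,\dots,x_n,\bar x_n,\dots,\bar x_1)\in\mathbb Z^{2n}: x_i,\bar x_i\ge0,\ \sum_{i=1}^n(x_i+\bar x_i)=l\}$. Crystal structure: $\tilde f_0b=(x_1,x_2+1,\dots,\bar x_2,\bar x_1-1)$ if $x_2\ge\bar x_2$, $(x_1+1,x_2,\dots,\bar x_2-1,\bar x_1)$ if $x_2<\bar x_2$; for $1\le i\le n-1$, $\tilde f_ib$ replaces $(x_i,x_{i+1})$ by $(x_i-1,x_{i+1}+1)$ if $x_{i+1}\ge\bar x_{i+1}$, and $(\bar x_{i+1},\bar x_i)$ by $(\bar x_{i+1}-1,\bar x_i+1)$ if $x_{i+1}<\bar x_{i+1}$; $\tilde f_nb$ replaces $(x_n,\bar x_n)$ by $(x_n-1,\bar x_n+1)$; $\tilde e_ib=b'$ iff $\tilde f_ib'=b$; results outside $B$ mean $0$. $\varphi_0(b)=\bar x_1+(\bar x_2-x_2)_+$, $\varepsilon_0(b)=x_1+(x_2-\bar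 x_2)_+$; $\varphi_i(b)=x_i+(\bar x_{i+1}-x_{i+1})_+$, $\varepsilon_i(b)=\bar x_i+(x_{i+1}-\bar x_{i+1})_+$ ($1\le i\le n-1$); $\varphi_n(b)=x_n$, $\varepsilon_n(b)=\bar x_n$. For $\lambda=l\Lambda_0$: $\lambda_j=l\Lambda_{\epsilon(j)}$, $\overline b_j=(0,\dots,0,l)$ ($j$ odd), $(l,0,\dots,0)$ ($j$ even); $\langle\lambda_j,h_i\rangle$ is the coefficient of $\Lambda_i$ in $\lambda_j$. Given $d$, $i^{(j)}_a$: $B^{(j)}_0=\{\overline b_j\}$, $B^{(j)}_a=\bigcup_{n\ge0}\tilde f_{i^{(j)}_a}^nB^{(j)}_{a-1}\setminus\{0\}$; $b^{(j)}_0=\overline b_j$, $b^{(j)}_a=\tilde f_{i^{(j)}_a}^{\varphi_{i^{(j)}_a}(b^{(j)}_{a-1})}b^{(j)}_{a-1}$. *)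

theory Defs
  imports Main
begin

text \<open>An element b = (x_1,...,x_n, xbar_n,...,xbar_1) is an int list of length 2n:
  x_i is stored at position i-1, xbar_i at position 2n-i.\<close>

definition xc :: "int list \<Rightarrow> nat \<Rightarrow> int" where
  "xc b i = b ! (i - 1)"

definition xbc :: "nat \<Rightarrow> int list \<Rightarrow> nat \<Rightarrow> int" where
  "xbc n b i = b ! (2 * n - i)"

definition crysB :: "nat \<Rightarrow> nat \<Rightarrow> int list set" where
  "crysB n l = {b. length b = 2 * n \<and> (\<forall>k \<in> set b. 0 \<le> k) \<and> sum_list b = int l}"

definition par :: "nat \<Rightarrow> nat" where
  "par j = (if even j then 0 else 1)"

definition addx :: "int list \<Rightarrow> nat \<Rightarrow> int \<Rightarrow> int list" where
  "addx b i d = b[i - 1 := b ! (i - 1) + d]"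

definition addxb :: "nat \<Rightarrow> int list \<Rightarrow> nat \<Rightarrow> int \<Rightarrow> int list" where
  "addxb n b i d = b[2 * n - i := b ! (2 * n - i) + d]"

definition fraw :: "nat \<Rightarrow> nat \<Rightarrow> int list \<Rightarrow> int list" where
  "fraw n i b =
    (if i = 0 then
       (if xc b 2 \<ge> xbc n b 2 then addxb n (addx b 2 1) 1 (-1)
        else addxb n (addx b 1 1) 2 (-1))
     else if i < n then
       (if xc b (i+1) \<ge> xbc n b (i+1) then addx (addx b i (-1)) (i+1) 1
        else addxb n (addxb n b (i+1) (-1)) i 1)
     else addxb n (addx b n (-1)) n 1)"

text \<open>Kashiwara operator f_i; None represents 0 (result outside B, or i > n).\<close>
definition ftil :: "nat \<Rightarrow> nat \<Rightarrow> nat \<Rightarrow> int list \<Rightarrow> int list option" where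
  "ftil n l i b = (if i \<le> n \<and> fraw n i b \<in> crysB n l then Some (fraw n i b) else None)"

fun fpow :: "nat \<Rightarrow> nat \<Rightarrow> nat \<Rightarrow> nat \<Rightarrow> int list \<Rightarrow> int list option" where
  "fpow n l i 0 b = Some b"
| "fpow n l i (Suc k) b = Option.bind (fpow n l i k b) (ftil n l i)"

definition phi :: "nat \<Rightarrow> nat \<Rightarrow> int list \<Rightarrow> int" where
  "phi n i b =
    (if i = 0 then xbc n b 1 + max (xbc n b 2 - xc b 2) 0
     else if i < n then xc b i + max (xbc n b (i+1) - xc b (i+1)) 0
     else xc b n)"

definition eps :: "nat \<Rightarrow> nat \<Rightarrow> int list \<Rightarrow> int" where
  "eps n i b =
    (if i = 0 then xc b 1 + max (xc b 2 - xbc n b 2) 0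
     else if i < n then xbc n b i + max (xc b (i+1) - xbc n b (i+1)) 0
     else xbc n b n)"

definition bx :: "nat \<Rightarrow> nat \<Rightarrow> nat \<Rightarrow> int list" where
  "bx n l k = (replicate (2 * n) 0)[k - 1 := int l]"

definition bxb :: "nat \<Rightarrow> nat \<Rightarrow> nat \<Rightarrow> int list" where
  "bxb n l k = (replicate (2 * n) 0)[2 * n - k := int l]"

definition bbar :: "nat \<Rightarrow> nat \<Rightarrow> nat \<Rightarrow> int list" where
  "bbar n l j = (if odd j then bxb n l 1 else bx n l 1)"

text \<open><lambda_j, h_i> for lambda = l Lambda_0, lambda_j = l Lambda_{eps(j)}.\<close>
definition lamh :: "nat \<Rightarrow> nat \<Rightarrow> nat \<Rightarrow> int" where
  "lamh l j i = (if i = par j then int l else 0)"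

definition iseq :: "nat \<Rightarrow> nat \<Rightarrow> nat \<Rightarrow> nat" where
  "iseq n j a = (if a = 1 \<or> a = 2 * n - 1 then par (j + 1)
                 else if 2 \<le> a \<and> a \<le> n then a else 2 * n - a)"

definition inext :: "nat \<Rightarrow> nat \<Rightarrow> nat \<Rightarrow> nat" where
  "inext n j a = (if a = 2 * n - 1 then iseq n (j + 1) 1 else iseq n j (a + 1))"

fun Bset :: "nat \<Rightarrow> nat \<Rightarrow> nat \<Rightarrow> nat \<Rightarrow> int list set" where
  "Bset n l j 0 = {bbar n l j}"
| "Bset n l j (Suc a) =
     {b'. \<exists>b \<in> Bset n l j a. \<exists>k. fpow n l (iseq n j (Suc a)) k b = Some b'}"

fun bseq :: "nat \<Rightarrow> nat \<Rightarrow> nat \<Rightarrow> nat \<Rightarrow> int list option" where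
  "bseq n l j 0 = Some (bbar n l j)"
| "bseq n l j (Suc a) =
     Option.bind (bseq n l j a)
       (\<lambda>b. fpow n l (iseq n j (Suc a)) (nat (phi n (iseq n j (Suc a)) b)) b)"

end

theory Submission imports Defs begin

lemma sum_list_upd_int:
  "k < length xs \<Longrightarrow> sum_list (xs[k := x]) = sum_list xs + x - xs ! k" for xs :: "int list"
  by (induction xs arbitrary: k) (auto split: nat.splits)

definition mv :: "int list \<Rightarrow> nat \<Rightarrow> nat \<Rightarrow> int list" where
  "mv b p q = (b[p := b!p - 1])[q := b!q + 1]"

definition vv :: "nat \<Rightarrow> nat \<Rightarrow> nat \<Rightarrow> int list" where
  "vv n l p = (replicate (2*n) 0)[p := int l]"

definition SA :: "nat \<Rightarrow> nat \<Rightarrow> nat set \<Rightarrow> int list set" where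
  "SA n l A = {b \<in> crysB n l. \<forall>r<2*n. b!r \<noteq> 0 \<longrightarrow> r \<in> A}"

lemma crysB_iff:
  "b \<in> crysB n l \<longleftrightarrow> length b = 2*n \<and> (\<forall>r<2*n. 0 \<le> b!r) \<and> sum_list b = int l"
  unfolding crysB_def by (auto simp: all_set_conv_all_nth)

lemma mv_length[simp]: "length (mv b p q) = length b"
  by (simp add: mv_def)

lemma mv_nth:
  "p < length b \<Longrightarrow> q < length b \<Longrightarrow> p \<noteq> q \<Longrightarrow>
   mv b p q ! r = (if r = p then b!p - 1 else if r = q then b!q + 1 else b!r)"
  by (simp add: mv_def nth_list_update)

lemma mv_sum:
  "p < length b \<Longrightarrow> q < length b \<Longrightarrow> p \<noteq> q \<Longrightarrow> sum_list (mv b p q) = sum_list b"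
  by (simp add: mv_def sum_list_upd_int nth_list_update)

lemma mv_crysB:
  assumes "b \<in> crysB n l" "p < 2*n" "q < 2*n" "p \<noteq> q"
  shows "mv b p q \<in> crysB n l \<longleftrightarrow> 1 \<le> b!p"
proof -
  have L: "length b = 2*n" using assms(1) by (simp add: crysB_iff)
  show ?thesis
  proof
    assume "mv b p q \<in> crysB n l"
    then have "0 \<le> mv b p q ! p" using assms(2) by (simp add: crysB_iff)
    then show "1 \<le> b!p" using assms L by (simp add: mv_nth)
  next
    assume "1 \<le> b!p"
    then show "mv b p q \<in> crysB n l" using assms L
      by (auto simp: crysB_iff mv_nth mv_sum)
  qed
qed

lemma mv_SA:
  assumes "b \<in> SA n l A" "p < 2*n" "q < 2*n" "p \<noteq> q" "1 \<le> b!p" "q \<in> A"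
  shows "mv b p q \<in> SA n l A"
proof -
  have L: "length b = 2*n" using assms(1) by (simp add: SA_def crysB_iff)
  have "mv b p q \<in> crysB n l" using assms by (simp add: SA_def mv_crysB)
  moreover have "\<forall>r<2*n. mv b p q ! r \<noteq> 0 \<longrightarrow> r \<in> A"
    using assms L unfolding SA_def by (auto simp: mv_nth)
  ultimately show ?thesis by (simp add: SA_def)
qed

lemma SA_crysB: "b \<in> SA n l A \<Longrightarrow> b \<in> crysB n l" by (simp add: SA_def)
lemma SA_len: "b \<in> SA n l A \<Longrightarrow> length b = 2*n" by (simp add: SA_def crysB_iff)
lemma SA_nonneg: "b \<in> SA n l A \<Longrightarrow> r < 2*n \<Longrightarrow> 0 \<le> b!r" by (simp add: SA_def crysB_iff)
lemma SA_zero: "b \<in> SA n l A \<Longrightarrow> r < 2*n \<Longrightarrow> r \<notin> A \<Longrightarrow> b!r = 0" by (auto simp add: SA_def)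

lemma fraw0:
  assumes "length b = 2*n" "n \<ge> 2"
  shows "fraw n 0 b = (if b!(2*n-2) \<le> b!1 then mv b (2*n-1) 1 else mv b (2*n-2) 0)"
  using assms unfolding fraw_def addx_def addxb_def xc_def xbc_def mv_def
  by (auto intro!: nth_equalityI simp: nth_list_update)

lemma frawi:
  assumes "length b = 2*n" "0 < i" "i < n"
  shows "fraw n i b = (if b!(2*n-i-1) \<le> b!i then mv b (i-1) i else mv b (2*n-i-1) (2*n-i))"
  using assms unfolding fraw_def addx_def addxb_def xc_def xbc_def mv_def
  by (auto intro!: nth_equalityI simp: nth_list_update)

lemma frawn:
  assumes "length b = 2*n" "n \<ge> 1"
  shows "fraw n n b = mv b (n-1) n"
  using assms unfolding fraw_def addx_def addxb_def xc_def xbc_def mv_def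
  by (auto intro!: nth_equalityI simp: nth_list_update)

lemma ftil_eq: "i \<le> n \<Longrightarrow> ftil n l i b = (if fraw n i b \<in> crysB n l then Some (fraw n i b) else None)"
  by (simp add: ftil_def)


lemma closure:
  fixes \<mu> :: "int list \<Rightarrow> nat"
  assumes ST: "S \<subseteq> T"
    and pres: "\<And>b c. b \<in> T \<Longrightarrow> ftil n l i b = Some c \<Longrightarrow> c \<in> T"
    and pred: "\<And>b. b \<in> T \<Longrightarrow> b \<notin> S \<Longrightarrow> \<exists>b'\<in>T. ftil n l i b' = Some b \<and> \<mu> b' < \<mu> b"
  shows "{c. \<exists>b\<in>S. \<exists>k. fpow n l i k b = Some c} = T"
proof
  show "{c. \<exists>b\<in>S. \<exists>k. fpow n l i k b = Some c} \<subseteq> T"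
  proof clarify
    fix c b k assume b: "b \<in> S" and "fpow n l i k b = Some c"
    then show "c \<in> T"
    proof (induction k arbitrary: c)
      case 0 then show ?case using ST by auto
    next
      case (Suc k)
      then obtain d where "fpow n l i k b = Some d" "ftil n l i d = Some c"
        by (cases "fpow n l i k b") auto
      then show ?case using Suc pres by blast
    qed
  qed
next
  have "\<And>m b. \<mu> b = m \<Longrightarrow> b \<in> T \<Longrightarrow> \<exists>b0\<in>S. \<exists>k. fpow n l i k b0 = Some b"
  proof -
    fix m show "\<And>b. \<mu> b = m \<Longrightarrow> b \<in> T \<Longrightarrow> \<exists>b0\<in>S. \<exists>k. fpow n l i k b0 = Some b"
    proof (induction m rule: less_induct)
      case (less m b)
      show ?case
      proof (cases "b \<in> S")
        case True then show ?thesis by (intro bexI[of _ b] exI[of _ 0]) auto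
      next
        case False
        then obtain b' where b': "b' \<in> T" "ftil n l i b' = Some b" "\<mu> b' < \<mu> b"
          using pred less.prems by blast
        then obtain b0 k where "b0 \<in> S" "fpow n l i k b0 = Some b'"
          using less.IH less.prems by blast
        then show ?thesis using b' by (intro bexI[of _ b0] exI[of _ "Suc k"]) auto
      qed
    qed
  qed
  then show "T \<subseteq> {c. \<exists>b\<in>S. \<exists>k. fpow n l i k b = Some c}" by blast
qed

lemma SA_mono: "A' \<subseteq> A \<Longrightarrow> SA n l A' \<subseteq> SA n l A"
  by (auto simp: SA_def)

lemma not_SA':
  assumes "b \<in> SA n l A" "b \<notin> SA n l A'" "\<And>r. r < 2*n \<Longrightarrow> r \<in> A \<Longrightarrow> r \<notin> A' \<Longrightarrow> r = s" "s < 2*n"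
  shows "1 \<le> b!s"
proof -
  obtain r where r: "r < 2*n" "b!r \<noteq> 0" "r \<notin> A'"
    using assms(1,2) by (auto simp: SA_def)
  have "r \<in> A" using assms(1) r by (auto simp: SA_def)
  then have "r = s" using assms(3) r by blast
  then show ?thesis using r SA_nonneg[OF assms(1) r(1)] by simp
qed

lemma stageT1:
  assumes n2: "n \<ge> 2" and s: "1 \<le> s" "s \<le> n"
    and h1: "s - 1 \<in> A'" and h2: "A' \<subseteq> A" and h3: "s \<in> A"
    and h4: "\<And>r. r < 2*n \<Longrightarrow> r \<in> A \<Longrightarrow> r \<notin> A' \<Longrightarrow> r = s"
    and h5: "s < n \<Longrightarrow> 2*n - s - 1 \<notin> A"
  shows "{c. \<exists>b\<in>SA n l A'. \<exists>k. fpow n l s k b = Some c} = SA n l A"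
proof -
  have fr: "fraw n s b = mv b (s-1) s" if b: "b \<in> SA n l A" for b
  proof (cases "s = n")
    case True then show ?thesis using frawn[OF SA_len[OF b]] s by simp
  next
    case False
    then have "b!(2*n-s-1) = 0" using SA_zero[OF b, of "2*n-s-1"] h5 s by simp
    moreover have "0 \<le> b!s" using SA_nonneg[OF b, of s] s by simp
    ultimately show ?thesis using frawi[OF SA_len[OF b], of s] s False by simp
  qed
  have ft: "ftil n l s b = (if 1 \<le> b!(s-1) then Some (mv b (s-1) s) else None)"
    if b: "b \<in> SA n l A" for b
    using ftil_eq[of s n l b] fr[OF b] mv_crysB[OF SA_crysB[OF b], of "s-1" s] s by simp
  show ?thesis
  proof (rule closure[where \<mu> = "\<lambda>b. nat (b!s)"])
    show "SA n l A' \<subseteq> SA n l A" using h2 by (rule SA_mono)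
  next
    fix b c assume b: "b \<in> SA n l A" and "ftil n l s b = Some c"
    then have "c = mv b (s-1) s" "1 \<le> b!(s-1)" using ft[OF b] by (auto split: if_splits)
    then show "c \<in> SA n l A" using mv_SA[OF b, of "s-1" s] s h3 by simp
  next
    fix b assume b: "b \<in> SA n l A" and nb: "b \<notin> SA n l A'"
    have bs: "1 \<le> b!s" using not_SA'[OF b nb h4] s by simp
    define b' where "b' = mv b s (s-1)"
    have L: "length b = 2*n" using SA_len[OF b] .
    have b'A: "b' \<in> SA n l A" unfolding b'_def using mv_SA[OF b, of s "s-1"] s bs h1 h2 by auto
    have "ftil n l s b' = Some (mv b' (s-1) s)"
    proof -
      have "0 \<le> b!(s-1)" using SA_nonneg[OF b, of "s-1"] s by simp
      moreover have "s - 1 \<noteq> s" using s by simp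
      ultimately show ?thesis using ft[OF b'A] L s unfolding b'_def by (simp add: mv_nth)
    qed
    moreover have "mv b' (s-1) s = b"
      using L s unfolding b'_def by (auto intro!: nth_equalityI simp: mv_nth)
    moreover have "nat (b'!s) < nat (b!s)" using L s bs unfolding b'_def by (simp add: mv_nth)
    ultimately show "\<exists>b'\<in>SA n l A. ftil n l s b' = Some b \<and> nat (b'!s) < nat (b!s)"
      using b'A by auto
  qed
qed


lemma stageT2:
  assumes n2: "n \<ge> 2" and s: "n < s" "s \<le> 2*n - 1"
    and h2: "A' \<subseteq> A" and h3: "s \<in> A" "s - 1 \<in> A" "2*n-s \<in> A" "2*n-s-1 \<in> A"
    and h4: "\<And>r. r < 2*n \<Longrightarrow> r \<in> A \<Longrightarrow> r \<notin> A' \<Longrightarrow> r = s"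
  shows "{c. \<exists>b\<in>SA n l A'. \<exists>k. fpow n l (2*n-s) k b = Some c} = SA n l A"
proof -
  define i where "i = 2*n - s"
  have i: "0 < i" "i < n" "2*n-i-1 = s-1" "2*n-i = s" "i - 1 < i" "i < s - 1" using s unfolding i_def by auto
  have fr: "fraw n i b = (if b!(s-1) \<le> b!i then mv b (i-1) i else mv b (s-1) s)"
    if b: "b \<in> SA n l A" for b
    using frawi[OF SA_len[OF b] i(1,2)] i by simp
  have ft: "ftil n l i b = (if b!(s-1) \<le> b!i then (if 1 \<le> b!(i-1) then Some (mv b (i-1) i) else None)
       else (if 1 \<le> b!(s-1) then Some (mv b (s-1) s) else None))"
    if b: "b \<in> SA n l A" for b
    using ftil_eq[of i n l b] fr[OF b] mv_crysB[OF SA_crysB[OF b], of "i-1" i]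
      mv_crysB[OF SA_crysB[OF b], of "s-1" s] i s by simp
  show ?thesis unfolding i_def[symmetric]
  proof (rule closure[where \<mu> = "\<lambda>b. nat (b!s + max (b!i - b!(s-1)) 0)"])
    show "SA n l A' \<subseteq> SA n l A" using h2 by (rule SA_mono)
  next
    fix b c assume b: "b \<in> SA n l A" and c: "ftil n l i b = Some c"
    show "c \<in> SA n l A"
    proof (cases "b!(s-1) \<le> b!i")
      case True
      then have "c = mv b (i-1) i" "1 \<le> b!(i-1)" using ft[OF b] c by (auto split: if_splits)
      then show ?thesis using mv_SA[OF b, of "i-1" i] i s h3 unfolding i_def by simp
    next
      case False
      then have "c = mv b (s-1) s" "1 \<le> b!(s-1)" using ft[OF b] c by (auto split: if_splits)
      then show ?thesis using mv_SA[OF b, of "s-1" s] i s h3 by simp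
    qed
  next
    fix b assume b: "b \<in> SA n l A" and nb: "b \<notin> SA n l A'"
    have bs: "1 \<le> b!s" using not_SA'[OF b nb h4] s by simp
    have L: "length b = 2*n" using SA_len[OF b] .
    have nn: "0 \<le> b!(i-1)" "0 \<le> b!i" "0 \<le> b!(s-1)" using SA_nonneg[OF b] i s by auto
    show "\<exists>b'\<in>SA n l A. ftil n l i b' = Some b \<and>
            nat (b'!s + max (b'!i - b'!(s-1)) 0) < nat (b!s + max (b!i - b!(s-1)) 0)"
    proof (cases "b!(s-1) < b!i")
      case True
      define b' where "b' = mv b i (i-1)"
      have b'A: "b' \<in> SA n l A" unfolding b'_def using mv_SA[OF b, of i "i-1"] i s True nn h3
        unfolding i_def by auto
      have e: "b'!(s-1) = b!(s-1)" "b'!i = b!i - 1" "b'!(i-1) = b!(i-1) + 1" "b'!s = b!s"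
        using L i s unfolding b'_def by (auto simp: mv_nth)
      have "ftil n l i b' = Some (mv b' (i-1) i)" using ft[OF b'A] e True nn by simp
      moreover have "mv b' (i-1) i = b"
        using L i s unfolding b'_def by (auto intro!: nth_equalityI simp: mv_nth)
      ultimately show ?thesis using b'A e True bs by (intro bexI[of _ b']) auto
    next
      case False
      define b' where "b' = mv b s (s-1)"
      have b'A: "b' \<in> SA n l A" unfolding b'_def using mv_SA[OF b, of s "s-1"] i s bs h3 by auto
      have e: "b'!(s-1) = b!(s-1) + 1" "b'!i = b!i" "b'!s = b!s - 1"
        using L i s unfolding b'_def by (auto simp: mv_nth)
      have "ftil n l i b' = Some (mv b' (s-1) s)" using ft[OF b'A] e False nn by simp
      moreover have "mv b' (s-1) s = b"
        using L i s unfolding b'_def by (auto intro!: nth_equalityI simp: mv_nth)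
      ultimately show ?thesis using b'A e False bs by (intro bexI[of _ b']) auto
    qed
  qed
qed

lemma stageT0:
  assumes n2: "n \<ge> 3"
    and h1: "2*n-1 \<in> A'" and h2: "A' \<subseteq> A" and h3: "1 \<in> A" and h5: "2*n-2 \<notin> A"
    and h4: "\<And>r. r < 2*n \<Longrightarrow> r \<in> A \<Longrightarrow> r \<notin> A' \<Longrightarrow> r = 1"
  shows "{c. \<exists>b\<in>SA n l A'. \<exists>k. fpow n l 0 k b = Some c} = SA n l A"
proof -
  have fr: "fraw n 0 b = mv b (2*n-1) 1" if b: "b \<in> SA n l A" for b
  proof -
    have "b!(2*n-2) = 0" using SA_zero[OF b, of "2*n-2"] h5 n2 by simp
    moreover have "0 \<le> b!1" using SA_nonneg[OF b, of 1] n2 by simp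
    ultimately show ?thesis using fraw0[OF SA_len[OF b]] n2 by simp
  qed
  have ft: "ftil n l 0 b = (if 1 \<le> b!(2*n-1) then Some (mv b (2*n-1) 1) else None)"
    if b: "b \<in> SA n l A" for b
    using ftil_eq[of 0 n l b] fr[OF b] mv_crysB[OF SA_crysB[OF b], of "2*n-1" 1] n2 by simp
  show ?thesis
  proof (rule closure[where \<mu> = "\<lambda>b. nat (b!1)"])
    show "SA n l A' \<subseteq> SA n l A" using h2 by (rule SA_mono)
  next
    fix b c assume b: "b \<in> SA n l A" and "ftil n l 0 b = Some c"
    then have "c = mv b (2*n-1) 1" "1 \<le> b!(2*n-1)" using ft[OF b] by (auto split: if_splits)
    then show "c \<in> SA n l A" using mv_SA[OF b, of "2*n-1" 1] n2 h3 by simp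
  next
    fix b assume b: "b \<in> SA n l A" and nb: "b \<notin> SA n l A'"
    have bs: "1 \<le> b!1" using not_SA'[OF b nb h4] n2 by simp
    define b' where "b' = mv b 1 (2*n-1)"
    have L: "length b = 2*n" using SA_len[OF b] .
    have nn: "0 \<le> b!(2*n-1)" using SA_nonneg[OF b] n2 by simp
    have b'A: "b' \<in> SA n l A" unfolding b'_def using mv_SA[OF b, of 1 "2*n-1"] n2 bs h1 h2 by auto
    have "ftil n l 0 b' = Some (mv b' (2*n-1) 1)"
    proof -
      have "2*n - 1 \<noteq> 1" using n2 by simp
      then show ?thesis using ft[OF b'A] L n2 nn unfolding b'_def by (simp add: mv_nth)
    qed
    moreover have "mv b' (2*n-1) 1 = b"
      using L n2 unfolding b'_def by (auto intro!: nth_equalityI simp: mv_nth)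
    moreover have "nat (b'!1) < nat (b!1)" using L n2 bs unfolding b'_def by (simp add: mv_nth)
    ultimately show "\<exists>b'\<in>SA n l A. ftil n l 0 b' = Some b \<and> nat (b'!1) < nat (b!1)"
      using b'A by auto
  qed
qed

lemma stageTlast:
  assumes n2: "n \<ge> 3"
    and h2: "A' \<subseteq> A" and h3: "0 \<in> A" "1 \<in> A" "2*n-2 \<in> A" "2*n-1 \<in> A"
    and h4: "\<And>r. r < 2*n \<Longrightarrow> r \<in> A \<Longrightarrow> r \<notin> A' \<Longrightarrow> r = 0"
  shows "{c. \<exists>b\<in>SA n l A'. \<exists>k. fpow n l 0 k b = Some c} = SA n l A"
proof -
  have ft: "ftil n l 0 b = (if b!(2*n-2) \<le> b!1 then (if 1 \<le> b!(2*n-1) then Some (mv b (2*n-1) 1) else None)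
       else (if 1 \<le> b!(2*n-2) then Some (mv b (2*n-2) 0) else None))"
    if b: "b \<in> SA n l A" for b
    using ftil_eq[of 0 n l b] fraw0[OF SA_len[OF b]] mv_crysB[OF SA_crysB[OF b], of "2*n-1" 1]
      mv_crysB[OF SA_crysB[OF b], of "2*n-2" 0] n2 by simp
  show ?thesis
  proof (rule closure[where \<mu> = "\<lambda>b. nat (b!0 + max (b!1 - b!(2*n-2)) 0)"])
    show "SA n l A' \<subseteq> SA n l A" using h2 by (rule SA_mono)
  next
    fix b c assume b: "b \<in> SA n l A" and c: "ftil n l 0 b = Some c"
    show "c \<in> SA n l A"
    proof (cases "b!(2*n-2) \<le> b!1")
      case True
      then have "c = mv b (2*n-1) 1" "1 \<le> b!(2*n-1)" using ft[OF b] c by (auto split: if_splits)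
      then show ?thesis using mv_SA[OF b, of "2*n-1" 1] n2 h3 by simp
    next
      case False
      then have "c = mv b (2*n-2) 0" "1 \<le> b!(2*n-2)" using ft[OF b] c by (auto split: if_splits)
      then show ?thesis using mv_SA[OF b, of "2*n-2" 0] n2 h3 by simp
    qed
  next
    fix b assume b: "b \<in> SA n l A" and nb: "b \<notin> SA n l A'"
    have bs: "1 \<le> b!0" using not_SA'[OF b nb h4] n2 by simp
    have L: "length b = 2*n" using SA_len[OF b] .
    have nn: "0 \<le> b!(2*n-1)" "0 \<le> b!1" "0 \<le> b!(2*n-2)" using SA_nonneg[OF b] n2 by auto
    show "\<exists>b'\<in>SA n l A. ftil n l 0 b' = Some b \<and>
            nat (b'!0 + max (b'!1 - b'!(2*n-2)) 0) < nat (b!0 + max (b!1 - b!(2*n-2)) 0)"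
    proof (cases "b!(2*n-2) < b!1")
      case True
      define b' where "b' = mv b 1 (2*n-1)"
      have b'A: "b' \<in> SA n l A" unfolding b'_def using mv_SA[OF b, of 1 "2*n-1"] n2 True nn h3
        by auto
      have e: "b'!(2*n-2) = b!(2*n-2)" "b'!1 = b!1 - 1" "b'!(2*n-1) = b!(2*n-1) + 1" "b'!0 = b!0"
        using L n2 unfolding b'_def by (auto simp: mv_nth)
      have "ftil n l 0 b' = Some (mv b' (2*n-1) 1)" using ft[OF b'A] e True nn by simp
      moreover have "mv b' (2*n-1) 1 = b"
        using L n2 unfolding b'_def by (auto intro!: nth_equalityI simp: mv_nth)
      ultimately show ?thesis using b'A e True bs by (intro bexI[of _ b']) auto
    next
      case False
      define b' where "b' = mv b 0 (2*n-2)"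
      have b'A: "b' \<in> SA n l A" unfolding b'_def using mv_SA[OF b, of 0 "2*n-2"] n2 bs h3 by auto
      have e: "b'!(2*n-2) = b!(2*n-2) + 1" "b'!1 = b!1" "b'!0 = b!0 - 1"
        using L n2 unfolding b'_def by (auto simp: mv_nth)
      have "ftil n l 0 b' = Some (mv b' (2*n-2) 0)" using ft[OF b'A] e False nn by simp
      moreover have "mv b' (2*n-2) 0 = b"
        using L n2 unfolding b'_def by (auto intro!: nth_equalityI simp: mv_nth)
      ultimately show ?thesis using b'A e False bs by (intro bexI[of _ b']) auto
    qed
  qed
qed


definition Aset :: "nat \<Rightarrow> nat \<Rightarrow> nat \<Rightarrow> nat set" where
  "Aset n j a = (if even j \<or> 2*n-1 \<le> a then {..a} else {r. 1 \<le> r \<and> r \<le> a} \<union> {2*n-1})"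

lemma Aset_odd: "odd j \<Longrightarrow> a < 2*n-1 \<Longrightarrow> Aset n j a = {r. 1 \<le> r \<and> r \<le> a} \<union> {2*n-1}"
  by (simp add: Aset_def)

lemma vv_nth: "r < 2*n \<Longrightarrow> vv n l p ! r = (if r = p then int l else 0)"
  by (simp add: vv_def nth_list_update)

lemma vv_len[simp]: "length (vv n l p) = 2*n" by (simp add: vv_def)

lemma SA_single:
  assumes p: "p < 2*n" and A: "\<And>r. r < 2*n \<Longrightarrow> r \<in> A \<longleftrightarrow> r = p"
  shows "SA n l A = {vv n l p}"
proof
  have s0: "sum_list (replicate (2*n) (0::int)) = 0" by (induction n) auto
  have "sum_list (vv n l p) = int l" using p unfolding vv_def
    by (simp add: sum_list_upd_int s0)
  then have "vv n l p \<in> crysB n l"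
    using p by (simp add: crysB_iff vv_nth)
  then show "{vv n l p} \<subseteq> SA n l A" using A p by (auto simp: SA_def vv_nth)
next
  show "SA n l A \<subseteq> {vv n l p}"
  proof
    fix b assume b: "b \<in> SA n l A"
    have L: "length b = 2*n" using SA_len[OF b] .
    have z: "\<And>r. r < 2*n \<Longrightarrow> r \<noteq> p \<Longrightarrow> b!r = 0" using SA_zero[OF b] A by blast
    have "b = (replicate (2*n) 0)[p := b!p]"
      using L z p by (auto intro!: nth_equalityI simp: nth_list_update)
    then have "sum_list b = b!p" using p
      by (metis length_replicate list_update_overwrite nth_replicate sum_list_upd_int sum_list_replicate
          mult_zero_right of_nat_0 diff_zero add_0 add.commute)
    moreover have "sum_list b = int l" using SA_crysB[OF b] by (simp add: crysB_iff)
    ultimately have "b!p = int l" by simp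
    then have "b = vv n l p" using L z p by (auto intro!: nth_equalityI simp: vv_nth)
    then show "b \<in> {vv n l p}" by simp
  qed
qed

lemma bbar_vv: "bbar n l j = vv n l (if odd j then 2*n-1 else 0)"
  by (simp add: bbar_def bxb_def bx_def vv_def)

lemma Bset_eq:
  assumes n3: "n \<ge> 3"
  shows "a \<le> 2*n-1 \<Longrightarrow> Bset n l j a = SA n l (Aset n j a)"
proof (induction a)
  case 0
  show ?case
  proof (cases "odd j")
    case True
    then have "Aset n j 0 = {2*n-1}" using n3 by (auto simp: Aset_def)
    then show ?thesis using SA_single[of "2*n-1" n "Aset n j 0" l] n3 True
      by (simp add: bbar_vv)
  next
    case False
    then have "Aset n j 0 = {0}" using n3 by (auto simp: Aset_def)
    then show ?thesis using SA_single[of "0" n "Aset n j 0" l] n3 False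
      by (simp add: bbar_vv)
  qed
next
  case (Suc a)
  then have IH: "Bset n l j a = SA n l (Aset n j a)" by simp
  have eq: "Bset n l j (Suc a) = {c. \<exists>b\<in>SA n l (Aset n j a). \<exists>k. fpow n l (iseq n j (Suc a)) k b = Some c}"
    using IH by simp
  have sa: "Suc a \<le> 2*n-1" using Suc by simp
  show ?case
  proof (cases "even j")
    case ev: True
    have A: "Aset n j a = {..a}" "Aset n j (Suc a) = {..Suc a}" using ev by (simp_all add: Aset_def)
    show ?thesis
    proof (cases "Suc a \<le> n")
      case True
      have "iseq n j (Suc a) = Suc a" using ev True n3 by (auto simp: iseq_def par_def)
      moreover have "{c. \<exists>b\<in>SA n l {..a}. \<exists>k. fpow n l (Suc a) k b = Some c} = SA n l {..Suc a}"
        by (rule stageT1) (use True n3 in auto)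
      ultimately show ?thesis unfolding eq A by simp
    next
      case False
      have "iseq n j (Suc a) = 2*n - Suc a" using ev False n3 sa by (auto simp: iseq_def par_def)
      moreover have "{c. \<exists>b\<in>SA n l {..a}. \<exists>k. fpow n l (2*n - Suc a) k b = Some c} = SA n l {..Suc a}"
        by (rule stageT2) (use False n3 sa in auto)
      ultimately show ?thesis unfolding eq A by simp
    qed
  next
    case od: False
    show ?thesis
    proof (cases "a = 0")
      case True
      have A: "Aset n j a = {2*n-1}" "Aset n j (Suc a) = {1, 2*n-1}" using od True n3 by (auto simp: Aset_def)
      have "iseq n j (Suc a) = 0" using od True n3 by (auto simp: iseq_def par_def)
      moreover have "{c. \<exists>b\<in>SA n l {2*n-1}. \<exists>k. fpow n l 0 k b = Some c} = SA n l {1, 2*n-1}"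
        by (rule stageT0) (use n3 in auto)
      ultimately show ?thesis unfolding eq A by simp
    next
      case a0: False
      show ?thesis
      proof (cases "Suc a \<le> n")
        case True
        have A: "Aset n j a = {r. 1 \<le> r \<and> r \<le> a} \<union> {2*n-1}"
          "Aset n j (Suc a) = {r. 1 \<le> r \<and> r \<le> Suc a} \<union> {2*n-1}"
          using od True n3 by (simp_all add: Aset_odd)
        have "iseq n j (Suc a) = Suc a" using od True a0 n3 by (auto simp: iseq_def par_def)
        moreover have "{c. \<exists>b\<in>SA n l ({r. 1 \<le> r \<and> r \<le> a} \<union> {2*n-1}). \<exists>k. fpow n l (Suc a) k b = Some c}
            = SA n l ({r. 1 \<le> r \<and> r \<le> Suc a} \<union> {2*n-1})"
          by (rule stageT1) (use True a0 n3 in auto)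
        ultimately show ?thesis unfolding eq A by simp
      next
        case F: False
        show ?thesis
        proof (cases "Suc a = 2*n-1")
          case True
          have A: "Aset n j a = {r. 1 \<le> r \<and> r \<le> a} \<union> {2*n-1}"
            "Aset n j (Suc a) = {..Suc a}"
            using od True n3 by (simp_all add: Aset_odd Aset_def)
          have "iseq n j (Suc a) = 0" using od True n3 by (auto simp: iseq_def par_def)
          moreover have "{c. \<exists>b\<in>SA n l ({r. 1 \<le> r \<and> r \<le> a} \<union> {2*n-1}). \<exists>k. fpow n l 0 k b = Some c}
            = SA n l {..Suc a}"
            by (rule stageTlast) (use True n3 in auto)
          ultimately show ?thesis unfolding eq A by simp
        next
          case False
          have A: "Aset n j a = {r. 1 \<le> r \<and> r \<le> a} \<union> {2*n-1}"
            "Aset n j (Suc a) = {r. 1 \<le> r \<and> r \<le> Suc a} \<union> {2*n-1}"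
            using od False sa n3 by (simp_all add: Aset_odd)
          have "iseq n j (Suc a) = 2*n - Suc a" using od F False n3 sa by (auto simp: iseq_def par_def)
          moreover have "{c. \<exists>b\<in>SA n l ({r. 1 \<le> r \<and> r \<le> a} \<union> {2*n-1}). \<exists>k. fpow n l (2*n - Suc a) k b = Some c}
            = SA n l ({r. 1 \<le> r \<and> r \<le> Suc a} \<union> {2*n-1})"
            by (rule stageT2) (use F False sa n3 in auto)
          ultimately show ?thesis unfolding eq A by simp
        qed
      qed
    qed
  qed
qed


definition ww :: "nat \<Rightarrow> nat \<Rightarrow> nat \<Rightarrow> nat \<Rightarrow> nat \<Rightarrow> int list" where
  "ww n l p q t = ((replicate (2*n) 0)[p := int l - int t])[q := int t]"

lemma ww_len[simp]: "length (ww n l p q t) = 2*n" by (simp add: ww_def)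

lemma ww_nth: "r < 2*n \<Longrightarrow> p < 2*n \<Longrightarrow> q < 2*n \<Longrightarrow> p \<noteq> q \<Longrightarrow>
  ww n l p q t ! r = (if r = q then int t else if r = p then int l - int t else 0)"
  by (simp add: ww_def nth_list_update)

lemma transport:
  assumes pq: "p < 2*n" "q < 2*n" "p \<noteq> q" and i: "i \<le> n"
    and fr: "\<And>t. t < l \<Longrightarrow> fraw n i (ww n l p q t) = mv (ww n l p q t) p q"
  shows "t \<le> l \<Longrightarrow> fpow n l i t (vv n l p) = Some (ww n l p q t)"
proof (induction t)
  case 0
  have "vv n l p = ww n l p q 0" using pq by (auto intro!: nth_equalityI simp: vv_nth ww_nth)
  then show ?case by simp
next
  case (Suc t)
  have s0: "sum_list (replicate (2*n) (0::int)) = 0" by (induction n) auto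
  have crys: "ww n l p q t \<in> crysB n l"
    using pq Suc.prems unfolding crysB_iff
    by (auto simp: ww_nth) (simp add: ww_def sum_list_upd_int s0 nth_list_update)
  have "1 \<le> ww n l p q t ! p" using pq Suc.prems by (simp add: ww_nth)
  then have "ftil n l i (ww n l p q t) = Some (mv (ww n l p q t) p q)"
    using ftil_eq[OF i] fr[of t] Suc.prems mv_crysB[OF crys pq] by simp
  moreover have "mv (ww n l p q t) p q = ww n l p q (Suc t)"
    using pq by (auto intro!: nth_equalityI simp: mv_nth ww_nth)
  ultimately show ?case using Suc by simp
qed

lemma transport_full:
  assumes pq: "p < 2*n" "q < 2*n" "p \<noteq> q" and i: "i \<le> n"
    and fr: "\<And>t. t < l \<Longrightarrow> fraw n i (ww n l p q t) = mv (ww n l p q t) p q"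
    and ph: "phi n i (vv n l p) = int l"
  shows "fpow n l i (nat (phi n i (vv n l p))) (vv n l p) = Some (vv n l q)"
proof -
  have "ww n l p q l = vv n l q" using pq by (auto intro!: nth_equalityI simp: vv_nth ww_nth)
  then show ?thesis using transport[OF pq i fr, of l] ph by simp
qed

lemma phi_nth: "phi n i b = (if i = 0 then b!(2*n-1) + max (b!(2*n-2) - b!1) 0
   else if i < n then b!(i-1) + max (b!(2*n-i-1) - b!i) 0 else b!(n-1))"
  by (simp add: phi_def xc_def xbc_def)

lemma eps_nth: "eps n i b = (if i = 0 then b!0 + max (b!1 - b!(2*n-2)) 0
   else if i < n then b!(2*n-i) + max (b!i - b!(2*n-i-1)) 0 else b!n)"
  by (simp add: eps_def xc_def xbc_def)

definition pos :: "nat \<Rightarrow> nat \<Rightarrow> nat \<Rightarrow> nat" where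
  "pos n j a = (if a = 0 then (if odd j then 2*n-1 else 0)
     else if a = 2*n-1 then (if odd j then 0 else 2*n-1) else a)"

lemma bseq_eq:
  assumes n3: "n \<ge> 3"
  shows "a \<le> 2*n-1 \<Longrightarrow> bseq n l j a = Some (vv n l (pos n j a))"
proof (induction a)
  case 0 then show ?case by (simp add: bbar_vv pos_def)
next
  case (Suc a)
  then have IH: "bseq n l j a = Some (vv n l (pos n j a))" by simp
  have sa: "Suc a \<le> 2*n-1" using Suc by simp
  have eq: "bseq n l j (Suc a) = fpow n l (iseq n j (Suc a)) (nat (phi n (iseq n j (Suc a)) (vv n l (pos n j a)))) (vv n l (pos n j a))"
    using IH by simp
  show ?case
  proof (cases "(even j \<or> 2 \<le> Suc a) \<and> Suc a \<le> n")
    case True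
    have isq: "iseq n j (Suc a) = Suc a" using True n3 by (auto simp: iseq_def par_def)
    have ps: "pos n j a = a" "pos n j (Suc a) = Suc a" using True n3 by (auto simp: pos_def)
    have fr: "fraw n (Suc a) (ww n l a (Suc a) t) = mv (ww n l a (Suc a) t) a (Suc a)" for t
    proof (cases "Suc a = n")
      case True
      then have "n - 1 = a" by simp
      then show ?thesis using frawn[of "ww n l a (Suc a) t" n] True by simp
    next
      case False
      then have "2*n - Suc (Suc a) \<noteq> a" "2*n - Suc (Suc a) \<noteq> Suc a" using True by auto
      then show ?thesis using frawi[of "ww n l a (Suc a) t" n "Suc a"] True False n3 by (simp add: ww_nth)
    qed
    have ph: "phi n (Suc a) (vv n l a) = int l"
    proof (cases "Suc a = n")
      case T: True
      then have "n - 1 = a" by simp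
      then show ?thesis using T n3 by (simp add: phi_nth vv_nth)
    next
      case F: False
      then have "2*n - Suc a - 1 \<noteq> a" "Suc a < n" using True by auto
      then show ?thesis using True n3 by (simp add: phi_nth vv_nth)
    qed
    show ?thesis unfolding eq isq ps
      by (rule transport_full) (use True n3 fr ph in auto)
  next
    case c2: False
    show ?thesis
    proof (cases "odd j \<and> a = 0")
      case True
      have isq: "iseq n j (Suc a) = 0" using True n3 by (auto simp: iseq_def par_def)
      have ps: "pos n j a = 2*n-1" "pos n j (Suc a) = 1" using True n3 by (auto simp: pos_def)
      have fr: "fraw n 0 (ww n l (2*n-1) 1 t) = mv (ww n l (2*n-1) 1 t) (2*n-1) 1" for t
      proof -
        have "2*n-2 \<noteq> 1" "2*n-2 \<noteq> 2*n-1" "(1::nat) \<noteq> 2*n-1" using n3 by auto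
        then show ?thesis using fraw0[of "ww n l (2*n-1) 1 t" n] n3 by (simp add: ww_nth)
      qed
      have ph: "phi n 0 (vv n l (2*n-1)) = int l"
      proof -
        have "2*n-2 \<noteq> 2*n-1" "(1::nat) \<noteq> 2*n-1" using n3 by auto
        then show ?thesis using n3 by (simp add: phi_nth vv_nth)
      qed
      show ?thesis unfolding eq isq ps
        by (rule transport_full) (use n3 fr ph in auto)
    next
      case c3: False
      show ?thesis
      proof (cases "odd j \<and> Suc a = 2*n-1")
        case True
        have isq: "iseq n j (Suc a) = 0" using True n3 by (auto simp: iseq_def par_def)
        have ps: "pos n j a = 2*n-2" "pos n j (Suc a) = 0" using True n3 by (auto simp: pos_def)
        have fr: "t < l \<Longrightarrow> fraw n 0 (ww n l (2*n-2) 0 t) = mv (ww n l (2*n-2) 0 t) (2*n-2) 0" for t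
        proof -
          have "2*n-2 \<noteq> 1" "2*n-2 \<noteq> 0" using n3 by auto
          then show "t < l \<Longrightarrow> ?thesis" using fraw0[of "ww n l (2*n-2) 0 t" n] n3 by (simp add: ww_nth)
        qed
        have ph: "phi n 0 (vv n l (2*n-2)) = int l"
        proof -
          have "2*n-1 \<noteq> 2*n-2" "(1::nat) \<noteq> 2*n-2" using n3 by auto
          then show ?thesis using n3 by (simp add: phi_nth vv_nth)
        qed
        show ?thesis unfolding eq isq ps
          by (rule transport_full) (use n3 fr ph in auto)
      next
        case c4: False
        have nl: "n < Suc a" using c2 c3 n3 by auto
        have isq: "iseq n j (Suc a) = 2*n - Suc a" using nl c4 sa n3 by (auto simp: iseq_def par_def)
        have ps: "pos n j a = a" "pos n j (Suc a) = Suc a" using nl c4 sa n3 by (auto simp: pos_def)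
        have fr: "t < l \<Longrightarrow> fraw n (2*n - Suc a) (ww n l a (Suc a) t) = mv (ww n l a (Suc a) t) a (Suc a)" for t
        proof -
          have "2*n - Suc a \<noteq> a" "2*n - Suc a \<noteq> Suc a" "2*n - (2*n - Suc a) - 1 = a"
            "2*n - (2*n - Suc a) = Suc a" "0 < 2*n - Suc a" "2*n - Suc a < n" using nl sa by auto
          then show "t < l \<Longrightarrow> ?thesis" using frawi[of "ww n l a (Suc a) t" n "2*n - Suc a"] nl sa n3 by (simp add: ww_nth)
        qed
        have ph: "phi n (2*n - Suc a) (vv n l a) = int l"
        proof -
          have "2*n - Suc a - 1 \<noteq> a" "2*n - Suc a \<noteq> a" "2*n - (2*n - Suc a) - 1 = a"
            "0 < 2*n - Suc a" "2*n - Suc a < n" using nl sa by auto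
          then show ?thesis using n3 by (simp add: phi_nth vv_nth)
        qed
        show ?thesis unfolding eq isq ps
          by (rule transport_full) (use nl sa n3 fr ph in auto)
      qed
    qed
  qed
qed


lemma conv:
  assumes L: "length b = 2*n"
  shows "(\<forall>k\<in>{1..n}. (xc b k \<noteq> 0 \<longrightarrow> P k) \<and> (xbc n b k \<noteq> 0 \<longrightarrow> Q k)) \<longleftrightarrow>
         (\<forall>r<2*n. b!r \<noteq> 0 \<longrightarrow> (if r < n then P (r+1) else Q (2*n-r)))"
proof
  assume H: "\<forall>k\<in>{1..n}. (xc b k \<noteq> 0 \<longrightarrow> P k) \<and> (xbc n b k \<noteq> 0 \<longrightarrow> Q k)"
  show "\<forall>r<2*n. b!r \<noteq> 0 \<longrightarrow> (if r < n then P (r+1) else Q (2*n-r))"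
  proof (intro allI impI)
    fix r assume r: "r < 2*n" "b!r \<noteq> 0"
    show "if r < n then P (r+1) else Q (2*n-r)"
    proof (cases "r < n")
      case True
      then show ?thesis using H[rule_format, of "r+1"] r by (simp add: xc_def)
    next
      case False
      then have "2*n - (2*n - r) = r" "1 \<le> 2*n-r" "2*n-r \<le> n" using r by auto
      then show ?thesis using H[rule_format, of "2*n-r"] r False by (simp add: xbc_def)
    qed
  qed
next
  assume H: "\<forall>r<2*n. b!r \<noteq> 0 \<longrightarrow> (if r < n then P (r+1) else Q (2*n-r))"
  show "\<forall>k\<in>{1..n}. (xc b k \<noteq> 0 \<longrightarrow> P k) \<and> (xbc n b k \<noteq> 0 \<longrightarrow> Q k)"
  proof
    fix k assume k: "k \<in> {1..n}"
    have "k - 1 + 1 = k" "k-1 < n" "k - 1 < 2*n" using k by auto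
    then have "xc b k \<noteq> 0 \<longrightarrow> P k" using H[rule_format, of "k-1"] by (simp add: xc_def)
    moreover have "xbc n b k \<noteq> 0 \<longrightarrow> Q k"
    proof
      assume "xbc n b k \<noteq> 0"
      moreover have "\<not> 2*n-k < n" "2*n-k < 2*n" "2*n - (2*n-k) = k" using k by auto
      ultimately show "Q k" using H[rule_format, of "2*n-k"] by (simp add: xbc_def)
    qed
    ultimately show "(xc b k \<noteq> 0 \<longrightarrow> P k) \<and> (xbc n b k \<noteq> 0 \<longrightarrow> Q k)" by blast
  qed
qed

lemma set_conv:
  assumes "\<And>r. r < 2*n \<Longrightarrow> (if r < n then P (r+1) else Q (2*n-r)) \<longleftrightarrow> r \<in> A"
  shows "{b \<in> crysB n l. \<forall>k\<in>{1..n}. (xc b k \<noteq> 0 \<longrightarrow> P k) \<and> (xbc n b k \<noteq> 0 \<longrightarrow> Q k)} = SA n l A"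
  using assms conv[of _ n P Q] unfolding SA_def by (auto simp: crysB_iff)

lemma eps_nonneg: "b \<in> crysB n l \<Longrightarrow> n \<ge> 1 \<Longrightarrow> 0 \<le> eps n i b"
  by (auto simp: eps_nth crysB_iff)

lemma iv:
  assumes n3: "n \<ge> 3" and l: "l \<ge> 1" and a: "1 \<le> a" "a \<le> 2*n-1"
  shows "eps n (inext n j a) (vv n l (pos n j a)) = 0 \<and> phi n (inext n j a) (vv n l (pos n j a)) > 0"
proof -
  consider (A) "a \<le> n-2" | (B) "a = n-1" | (C) "n \<le> a" "a \<le> 2*n-3" | (D) "a = 2*n-2" | (E) "a = 2*n-1"
    using a n3 by linarith
  then show ?thesis
  proof cases
    case A
    have e: "inext n j a = a+1" "pos n j a = a" using A a n3 by (auto simp: inext_def iseq_def pos_def)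
    have f: "2*n - (a+1) \<noteq> a" "a+1 < n" "0 < a+1" "2*n - (a+1) < 2*n" "2*n-(a+1)-1 \<noteq> a" using A n3 by auto
    show ?thesis unfolding e using f l n3 by (simp add: eps_nth phi_nth vv_nth)
  next
    case B
    have e: "inext n j a = n" "pos n j a = n-1" using B a n3 by (auto simp: inext_def iseq_def pos_def)
    show ?thesis unfolding e using l n3 by (simp add: eps_nth phi_nth vv_nth)
  next
    case C
    have e: "inext n j a = 2*n-a-1" "pos n j a = a" using C a n3 by (auto simp: inext_def iseq_def pos_def)
    have f: "0 < 2*n-a-1" "2*n-a-1 < n" "2*n - (2*n-a-1) \<noteq> a" "2*n-a-1 \<noteq> a" "2*n-a-1-1 \<noteq> a"
       "2*n - (2*n-a-1) - 1 = a" "2*n - (2*n-a-1) < 2*n" using C n3 by auto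
    show ?thesis unfolding e using f l n3 by (simp add: eps_nth phi_nth vv_nth)
  next
    case D
    have f: "2*n-2 \<noteq> 0" "2*n-2 \<noteq> 1" "2*n-2 \<noteq> 2*n-1" "(1::nat) < n" "2*n-1-1 = 2*n-2" using n3 by auto
    show ?thesis
    proof (cases "odd j")
      case True
      have e: "inext n j a = 0" "pos n j a = 2*n-2" using True D n3 by (auto simp: inext_def iseq_def pos_def par_def)
      show ?thesis unfolding e using f l n3 by (simp add: eps_nth phi_nth vv_nth)
    next
      case False
      have e: "inext n j a = 1" "pos n j a = 2*n-2" using False D n3 by (auto simp: inext_def iseq_def pos_def par_def)
      show ?thesis unfolding e using f l n3 by (simp add: eps_nth phi_nth vv_nth)
    qed
  next
    case E
    have f: "2*n-2 \<noteq> 0" "2*n-2 \<noteq> 1" "2*n-1 \<noteq> 1" "2*n-1 \<noteq> 0" "(1::nat) < n" "2*n-1-1 = 2*n-2" using n3 by auto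
    show ?thesis
    proof (cases "odd j")
      case True
      have e: "inext n j a = 1" "pos n j a = 0" using True E n3 by (auto simp: inext_def iseq_def pos_def par_def)
      show ?thesis unfolding e using f l n3 by (simp add: eps_nth phi_nth vv_nth)
    next
      case False
      have e: "inext n j a = 0" "pos n j a = 2*n-1" using False E n3 by (auto simp: inext_def iseq_def pos_def par_def)
      show ?thesis unfolding e using f l n3 by (simp add: eps_nth phi_nth vv_nth)
    qed
  qed
qed

theorem mainTheorem5:
  fixes n l :: nat
  assumes "n \<ge> 3" and "l \<ge> 1"
  shows
    "(\<forall>j\<ge>1. Bset n l j (2 * n - 1) = crysB n l)
   \<and> (\<forall>j\<ge>1. \<forall>a. 1 \<le> a \<and> a \<le> 2 * n - 1 \<longrightarrow>
        (\<forall>b \<in> Bset n l j (a - 1). lamh l j (iseq n j a) \<le> eps n (iseq n j a) b))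
   \<and> (\<forall>j\<ge>1. \<forall>a. 1 \<le> a \<and> a \<le> 2 * n - 1 \<longrightarrow>
        (\<exists>c. bseq n l j a = Some c \<and> eps n (inext n j a) c = 0 \<and> phi n (inext n j a) c > 0))
   \<and> (\<forall>j\<ge>1. bseq n l (j + 1) 0 =
        Option.bind (bseq n l j (2 * n - 1))
          (fpow n l (iseq n (j + 1) 1) (nat (lamh l (j + 1) (iseq n (j + 1) 1)))))
   \<and> (\<forall>j\<ge>1. Bset n l j 0 = (if odd j then {bxb n l 1} else {bx n l 1}))
   \<and> (\<forall>j\<ge>1. \<forall>a. 1 \<le> a \<and> a \<le> n - 1 \<longrightarrow>
        Bset n l j a = {b \<in> crysB n l.
          (\<forall>k \<in> {1..n}. (xc b k \<noteq> 0 \<longrightarrow> (if odd j then 2 \<le> k \<and> k \<le> a + 1 else k \<le> a + 1))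
                      \<and> (xbc n b k \<noteq> 0 \<longrightarrow> odd j \<and> k = 1))})
   \<and> (\<forall>j\<ge>1. \<forall>a. 1 \<le> a \<and> a \<le> n - 1 \<longrightarrow>
        Bset n l j (n + a - 1) = {b \<in> crysB n l.
          (\<forall>k \<in> {1..n}. (xc b k \<noteq> 0 \<longrightarrow> (if odd j then 2 \<le> k else True))
                      \<and> (xbc n b k \<noteq> 0 \<longrightarrow> (n - a + 1 \<le> k \<or> (odd j \<and> k = 1))))})
   \<and> (\<forall>j\<ge>1. bseq n l j 0 = Some (if odd j then bxb n l 1 else bx n l 1))
   \<and> (\<forall>j\<ge>1. bseq n l j (2 * n - 1) = Some (if odd j then bx n l 1 else bxb n l 1))
   \<and> (\<forall>j\<ge>1. \<forall>a. 1 \<le> a \<and> a \<le> n - 1 \<longrightarrow>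
        bseq n l j a = Some (bx n l (a + 1)) \<and>
        bseq n l j (n + a - 1) = Some (bxb n l (n - a + 1)))"
proof -
  have n3: "n \<ge> 3" and l1: "l \<ge> 1" using assms by auto
  have bx_vv: "\<And>k. bx n l k = vv n l (k-1)" by (simp add: bx_def vv_def)
  have bxb_vv: "\<And>k. bxb n l k = vv n l (2*n-k)" by (simp add: bxb_def vv_def)
  have P1: "\<forall>j\<ge>1. Bset n l j (2 * n - 1) = crysB n l"
  proof (intro allI impI)
    fix j :: nat
    have "Aset n j (2*n-1) = {..2*n-1}" by (simp add: Aset_def)
    moreover have "SA n l {..2*n-1} = crysB n l" by (auto simp: SA_def crysB_iff)
    ultimately show "Bset n l j (2 * n - 1) = crysB n l" using Bset_eq[OF n3, of "2*n-1" l j] by simp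
  qed
  have P2: "\<forall>j\<ge>1. \<forall>a. 1 \<le> a \<and> a \<le> 2 * n - 1 \<longrightarrow>
        (\<forall>b \<in> Bset n l j (a - 1). lamh l j (iseq n j a) \<le> eps n (iseq n j a) b)"
  proof (intro allI impI ballI)
    fix j a b assume a: "1 \<le> a \<and> a \<le> 2 * n - 1" and b: "b \<in> Bset n l j (a - 1)"
    have "b \<in> crysB n l" using b Bset_eq[OF n3, of "a-1" l j] a SA_crysB by auto
    then have "0 \<le> eps n (iseq n j a) b" using eps_nonneg n3 by simp
    moreover have "lamh l j (iseq n j a) = 0" using a
      by (auto simp: lamh_def iseq_def par_def)
    ultimately show "lamh l j (iseq n j a) \<le> eps n (iseq n j a) b" by simp
  qed
  have P3: "\<forall>j\<ge>1. \<forall>a. 1 \<le> a \<and> a \<le> 2 * n - 1 \<longrightarrow>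
        (\<exists>c. bseq n l j a = Some c \<and> eps n (inext n j a) c = 0 \<and> phi n (inext n j a) c > 0)"
    using bseq_eq[OF n3] iv[OF n3 l1] by auto
  have P4: "\<forall>j\<ge>1. bseq n l (j + 1) 0 =
        Option.bind (bseq n l j (2 * n - 1))
          (fpow n l (iseq n (j + 1) 1) (nat (lamh l (j + 1) (iseq n (j + 1) 1))))"
  proof (intro allI impI)
    fix j :: nat
    have "lamh l (j + 1) (iseq n (j + 1) 1) = 0" by (simp add: lamh_def iseq_def par_def)
    moreover have "pos n j (2*n-1) = pos n (j+1) 0" using n3 by (simp add: pos_def)
    ultimately show "bseq n l (j + 1) 0 =
        Option.bind (bseq n l j (2 * n - 1))
          (fpow n l (iseq n (j + 1) 1) (nat (lamh l (j + 1) (iseq n (j + 1) 1))))"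
      using bseq_eq[OF n3, of "2*n-1" l j] bseq_eq[OF n3, of 0 l "j+1"] by simp
  qed
  have P5: "\<forall>j\<ge>1. Bset n l j 0 = (if odd j then {bxb n l 1} else {bx n l 1})"
    by (simp add: bbar_def)
  have P6: "\<forall>j\<ge>1. \<forall>a. 1 \<le> a \<and> a \<le> n - 1 \<longrightarrow>
        Bset n l j a = {b \<in> crysB n l.
          (\<forall>k \<in> {1..n}. (xc b k \<noteq> 0 \<longrightarrow> (if odd j then 2 \<le> k \<and> k \<le> a + 1 else k \<le> a + 1))
                      \<and> (xbc n b k \<noteq> 0 \<longrightarrow> odd j \<and> k = 1))}"
  proof (intro allI impI)
    fix j a :: nat assume a: "1 \<le> a \<and> a \<le> n - 1"
    have "{b \<in> crysB n l.
          (\<forall>k \<in> {1..n}. (xc b k \<noteq> 0 \<longrightarrow> (\<lambda>k. if odd j then 2 \<le> k \<and> k \<le> a + 1 else k \<le> a + 1) k)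
                      \<and> (xbc n b k \<noteq> 0 \<longrightarrow> (\<lambda>k. odd j \<and> k = 1) k))} = SA n l (Aset n j a)"
      by (rule set_conv) (use a n3 in \<open>auto simp: Aset_def\<close>)
    then show "Bset n l j a = {b \<in> crysB n l.
          (\<forall>k \<in> {1..n}. (xc b k \<noteq> 0 \<longrightarrow> (if odd j then 2 \<le> k \<and> k \<le> a + 1 else k \<le> a + 1))
                      \<and> (xbc n b k \<noteq> 0 \<longrightarrow> odd j \<and> k = 1))}"
    proof -
      have "a \<le> 2*n-1" using a by linarith
      then show ?thesis using Bset_eq[OF n3, of a l j] \<open>{b \<in> crysB n l. _} = _\<close> by simp
    qed
  qed
  have P7: "\<forall>j\<ge>1. \<forall>a. 1 \<le> a \<and> a \<le> n - 1 \<longrightarrow>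
        Bset n l j (n + a - 1) = {b \<in> crysB n l.
          (\<forall>k \<in> {1..n}. (xc b k \<noteq> 0 \<longrightarrow> (if odd j then 2 \<le> k else True))
                      \<and> (xbc n b k \<noteq> 0 \<longrightarrow> (n - a + 1 \<le> k \<or> (odd j \<and> k = 1))))}"
  proof (intro allI impI)
    fix j a :: nat assume a: "1 \<le> a \<and> a \<le> n - 1"
    have "{b \<in> crysB n l.
          (\<forall>k \<in> {1..n}. (xc b k \<noteq> 0 \<longrightarrow> (\<lambda>k. if odd j then 2 \<le> k else True) k)
                      \<and> (xbc n b k \<noteq> 0 \<longrightarrow> (\<lambda>k. n - a + 1 \<le> k \<or> (odd j \<and> k = 1)) k))} = SA n l (Aset n j (n+a-1))"
      by (rule set_conv) (use a n3 in \<open>auto simp: Aset_def\<close>)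
    then show "Bset n l j (n + a - 1) = {b \<in> crysB n l.
          (\<forall>k \<in> {1..n}. (xc b k \<noteq> 0 \<longrightarrow> (if odd j then 2 \<le> k else True))
                      \<and> (xbc n b k \<noteq> 0 \<longrightarrow> (n - a + 1 \<le> k \<or> (odd j \<and> k = 1))))}"
    proof -
      have "n+a-1 \<le> 2*n-1" using a by linarith
      then show ?thesis using Bset_eq[OF n3, of "n+a-1" l j] \<open>{b \<in> crysB n l. _} = _\<close> by simp
    qed
  qed
  have P8: "\<forall>j\<ge>1. bseq n l j 0 = Some (if odd j then bxb n l 1 else bx n l 1)"
    by (simp add: bbar_def)
  have P9: "\<forall>j\<ge>1. bseq n l j (2 * n - 1) = Some (if odd j then bx n l 1 else bxb n l 1)"
    using bseq_eq[OF n3, of "2*n-1" l] n3 by (simp add: pos_def bx_vv bxb_vv)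
  have P10: "\<forall>j\<ge>1. \<forall>a. 1 \<le> a \<and> a \<le> n - 1 \<longrightarrow>
        bseq n l j a = Some (bx n l (a + 1)) \<and>
        bseq n l j (n + a - 1) = Some (bxb n l (n - a + 1))"
  proof (intro allI impI)
    fix j a :: nat assume a: "1 \<le> a \<and> a \<le> n - 1"
    have "pos n j a = a" "pos n j (n+a-1) = n+a-1" "2*n - (n-a+1) = n+a-1"
      "a \<le> 2*n-1" "n+a-1 \<le> 2*n-1" using a n3 by (auto simp: pos_def)
    then show "bseq n l j a = Some (bx n l (a + 1)) \<and>
        bseq n l j (n + a - 1) = Some (bxb n l (n - a + 1))"
      using bseq_eq[OF n3, of a l j] bseq_eq[OF n3, of "n+a-1" l j] a by (simp add: bx_vv bxb_vv)
  qed
  show ?thesis using P1 P2 P3 P4 P5 P6 P7 P8 P9 P10 by blast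
qed

end
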